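(* In the setting below, suppose the tight disturbance bound assumption and the persistent excitation assumption hold. Then for all $t\in\mathbb{N}_{\ge0}$, all $\epsilon>0$, and every $\theta\in\mathbb{R}^p$ with $\|\theta^\ast-\theta\|\ge\epsilon$, there exists $j\in\{t+1,\dots,t+N_u\}$ such that $$\Pr\{\theta\notin\Delta_j\}\ \ge\ p_w\bigl(\epsilon\sqrt{\beta/N_u}\bigr).$$
   Context: Setting: $\theta^\ast\in\mathbb{R}^p$ is a fixed (unknown) parameter vector. $\mathcal{W}=\{w\in\mathbb{R}^{n_x}:\Pi_w w\le\pi_w\}$ is a compact convex polytope with $\pi_w>0$. The disturbances $w_0,w_1,\dots$ are independent random vectors with $w_t\in\mathcal{W}$ for all $t$. $D_0,D_1,\dots\in\mathbb{R}^{n_x\times p}$ is a given (non-random) sequence of regressor matrices. For $t\ge1$ the (random) unfalsified parameter set is $\Delta_t=\{\theta\in\mathbb{R}^p: D_{t-1}(\theta^\ast-\theta)+w_{t-1}\in\mathcal{W}\}$. $\|\cdot\|$ is the Euclidean norm (induced 2-norm for matrices); $\partial\mathcal{W}$ is the boundary of $\mathcal{W}$. Tight disturbance bound assumption: there is a function $p_w:(0,\infty)\to(0,1]$ such that for all $w^0\in\partial\mathcal{W}$, all $\epsilon>0$ and all $t\ge0$, $\Pr\{\|w_t-w^0\|<\epsilon\}\ge p_w(\epsilon)$. Persistent excitation assumption: there exist $\tau>0$, $\beta>0$ and an integer $N_u\ge\lceil p/n_x\rceil$ such that for every $t\ge0$, $\|D_t\|\le\tau$ and $\sum_{j=t}^{t+N_u-1}D_j^\top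 D_j\succeq\beta I$. *)

theory Defs
  imports "HOL-Probability.Probability"
begin

definition polytope :: "real^'n^'m \<Rightarrow> real^'m \<Rightarrow> (real^'n) set" where
  "polytope Pw pw = {w. \<forall>i. (Pw *v w) $ i \<le> pw $ i}"

text \<open>Unfalsified parameter set Delta_t for t >= 1, at outcome omega.\<close>
definition unfalsified ::
  "(real^'n) set \<Rightarrow> (nat \<Rightarrow> real^'p^'n) \<Rightarrow> ('o \<Rightarrow> nat \<Rightarrow> real^'n) \<Rightarrow> real^'p \<Rightarrow> nat \<Rightarrow> 'o \<Rightarrow> (real^'p) set" where
  "unfalsified W D w \<theta>s t \<omega> = {\<theta>. D (t - 1) *v (\<theta>s - \<theta>) + w \<omega> (t - 1) \<in> W}"

end

theory Submission
  imports Defs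
begin

lemma sum_mv: "finite S \<Longrightarrow> (sum A S) *v (x::real^'n) = (\<Sum>j\<in>S. A j *v x)"
  by (induction S rule: finite_induct) (auto simp: matrix_vector_mult_add_rdistrib)
lemma quad: "(x::real^'p) \<bullet> ((transpose (A::real^'p^'n) ** A) *v x) = (A *v x) \<bullet> (A *v x)"
  by (metis dot_lmul_matrix matrix_vector_mul_assoc transpose_matrix_vector inner_commute)

theorem proposition2:
  fixes M :: "'o measure"
    and w :: "'o \<Rightarrow> nat \<Rightarrow> real^'nx"
    and D :: "nat \<Rightarrow> real^'p^'nx"
    and Pw :: "real^'nx^'m" and pw :: "real^'m"
    and \<theta>s :: "real^'p"
    and p_w :: "real \<Rightarrow> real"
    and \<tau> \<beta> :: real and N_u :: nat
  assumes "prob_space M"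
    and meas: "\<And>t. (\<lambda>\<omega>. w \<omega> t) \<in> borel_measurable M"
    and indep: "prob_space.indep_vars M (\<lambda>_. borel) (\<lambda>t \<omega>. w \<omega> t) UNIV"
    and pw_pos: "\<And>i. pw $ i > 0"
    and W_compact: "compact (polytope Pw pw)"
    and w_in: "\<And>t \<omega>. \<omega> \<in> space M \<Longrightarrow> w \<omega> t \<in> polytope Pw pw"
    and p_w_range: "\<And>e. e > 0 \<Longrightarrow> 0 < p_w e \<and> p_w e \<le> 1"
    and tight: "\<And>w0 e t. w0 \<in> frontier (polytope Pw pw) \<Longrightarrow> e > 0 \<Longrightarrow>
                  measure M {\<omega> \<in> space M. norm (w \<omega> t - w0) < e} \<ge> p_w e"
    and \<tau>_pos: "\<tau> > 0" and \<beta>_pos: "\<beta> > 0"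
    and N_u: "N_u \<ge> nat \<lceil>real CARD('p) / real CARD('nx)\<rceil>"
    and D_bound: "\<And>t. onorm (\<lambda>x. D t *v x) \<le> \<tau>"
    and PE: "\<And>t x. x \<bullet> ((\<Sum>j=t..t+N_u-1. transpose (D j) ** D j) *v x) \<ge> \<beta> * (x \<bullet> x)"
    and eps: "\<epsilon> > 0"
    and far: "norm (\<theta>s - \<theta>) \<ge> \<epsilon>"
  shows "\<exists>j\<in>{t+1..t+N_u}.
           measure M {\<omega> \<in> space M. \<theta> \<notin> unfalsified (polytope Pw pw) D w \<theta>s j \<omega>}
             \<ge> p_w (\<epsilon> * sqrt (\<beta> / real N_u))"
proof -
  interpret P: prob_space M by fact
  define W where "W = polytope Pw pw"
  define x where "x = \<theta>s - \<theta>"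
  define \<delta> where "\<delta> = \<epsilon> * sqrt (\<beta> / real N_u)"
  have "real CARD('p) / real CARD('nx) > 0" by simp
  hence "N_u \<ge> 1" using N_u by linarith
  hence Npos: "real N_u > 0" by simp
  have dpos: "\<delta> > 0" unfolding \<delta>_def using eps \<beta>_pos Npos by simp
  have fin: "finite {t..t+N_u-1}" by simp
  have ne: "{t..t+N_u-1} \<noteq> {}" using \<open>N_u \<ge> 1\<close> by simp
  have card: "card {t..t+N_u-1} = N_u" using \<open>N_u \<ge> 1\<close> by simp
  have xx: "x \<bullet> x \<ge> \<epsilon>^2"
  proof -
    have "\<epsilon>^2 \<le> norm x ^2" using far eps unfolding x_def by (intro power_mono) auto
    thus ?thesis by (simp add: power2_norm_eq_inner)
  qed
  have S: "(\<Sum>j=t..t+N_u-1. (D j *v x) \<bullet> (D j *v x)) \<ge> \<beta> * \<epsilon>^2"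
  proof -
    have "(\<Sum>j=t..t+N_u-1. (D j *v x) \<bullet> (D j *v x)) = x \<bullet> ((\<Sum>j=t..t+N_u-1. transpose (D j) ** D j) *v x)"
      by (simp add: sum_mv inner_sum_right quad)
    also have "\<dots> \<ge> \<beta> * (x \<bullet> x)" by (rule PE)
    moreover have "\<beta> * (x \<bullet> x) \<ge> \<beta> * \<epsilon>^2" using xx \<beta>_pos by simp
    ultimately show ?thesis by linarith
  qed
  obtain j where j: "j \<in> {t..t+N_u-1}" and jbig: "(D j *v x) \<bullet> (D j *v x) \<ge> \<beta> * \<epsilon>^2 / real N_u"
  proof (rule ccontr)
    assume "\<not> thesis"
    hence "\<forall>j\<in>{t..t+N_u-1}. (D j *v x) \<bullet> (D j *v x) < \<beta> * \<epsilon>^2 / real N_u" using that by force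
    hence "(\<Sum>j=t..t+N_u-1. (D j *v x) \<bullet> (D j *v x)) < (\<Sum>j=t..t+N_u-1. \<beta> * \<epsilon>^2 / real N_u)"
      by (intro sum_strict_mono[OF fin ne]) auto
    also have "\<dots> = \<beta> * \<epsilon>^2" using card Npos by simp
    finally show False using S by linarith
  qed
  define v where "v = D j *v x"
  have "\<delta>^2 = \<beta> * \<epsilon>^2 / real N_u" unfolding \<delta>_def using \<beta>_pos Npos
    by (simp add: power_mult_distrib)
  hence "\<delta>^2 \<le> norm v ^2" using jbig unfolding v_def by (simp add: power2_norm_eq_inner)
  hence vd: "norm v \<ge> \<delta>" using dpos by (simp add: power2_le_iff_abs_le)
  hence vpos: "norm v > 0" using dpos by linarith
  have W0: "0 \<in> W" unfolding W_def polytope_def using pw_pos by (simp add: less_imp_le)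
  have Wc: "compact W" using W_compact W_def by simp
  obtain w0 where w0W: "w0 \<in> W" and w0max: "\<And>y. y \<in> W \<Longrightarrow> v \<bullet> y \<le> v \<bullet> w0"
  proof -
    have "continuous_on W (\<lambda>y. v \<bullet> y)" by (intro continuous_intros)
    hence "\<exists>x\<in>W. \<forall>y\<in>W. v \<bullet> y \<le> v \<bullet> x" using continuous_attains_sup[OF Wc] W0 by blast
    thus ?thesis using that by blast
  qed
  have w0fr: "w0 \<in> frontier W"
  proof -
    have "w0 \<notin> interior W"
    proof
      assume "w0 \<in> interior W"
      then obtain r where r: "r > 0" "ball w0 r \<subseteq> W" by (meson mem_interior)
      define y where "y = w0 + (r / 2 / norm v) *\<^sub>R v"
      have "dist w0 y < r" unfolding y_def dist_norm using r vpos by simp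
      hence "y \<in> W" using r by auto
      hence "v \<bullet> y \<le> v \<bullet> w0" by (rule w0max)
      moreover have "v \<bullet> y = v \<bullet> w0 + (r / 2 / norm v) * (v \<bullet> v)"
        unfolding y_def by (simp add: inner_add_right)
      moreover have "(r / 2 / norm v) * (v \<bullet> v) > 0" using r vpos
        by (simp add: inner_gt_zero_iff)
      ultimately show False by linarith
    qed
    thus ?thesis using w0W closure_subset unfolding frontier_def by auto
  qed
  have sub: "{\<omega> \<in> space M. norm (w \<omega> j - w0) < \<delta>} \<subseteq>
      {\<omega> \<in> space M. \<theta> \<notin> unfalsified W D w \<theta>s (j+1) \<omega>}"
  proof safe
    fix \<omega> assume om: "\<omega> \<in> space M" and nd: "norm (w \<omega> j - w0) < \<delta>"
      and mem: "\<theta> \<in> unfalsified W D w \<theta>s (j+1) \<omega>"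
    hence "v + w \<omega> j \<in> W" unfolding unfalsified_def v_def x_def by (simp add: add.commute)
    hence le: "v \<bullet> (v + w \<omega> j) \<le> v \<bullet> w0" by (rule w0max)
    have "\<bar>v \<bullet> (w \<omega> j - w0)\<bar> \<le> norm v * norm (w \<omega> j - w0)" by (rule Cauchy_Schwarz_ineq2)
    also have "\<dots> < norm v * \<delta>" using nd vpos by simp
    also have "\<dots> \<le> norm v * norm v" using vd vpos by simp
    also have "norm v * norm v = v \<bullet> v" by (metis power2_eq_square power2_norm_eq_inner)
    finally have "\<bar>v \<bullet> (w \<omega> j - w0)\<bar> < v \<bullet> v" .
    moreover have "v \<bullet> (v + w \<omega> j) = v \<bullet> v + v \<bullet> (w \<omega> j - w0) + v \<bullet> w0"
      by (simp add: inner_add_right inner_diff_right)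
    ultimately show False using le by linarith
  qed
  have closedW: "closed W" using Wc compact_imp_closed by blast
  have mset: "{\<omega> \<in> space M. \<theta> \<notin> unfalsified W D w \<theta>s (j+1) \<omega>} \<in> sets M"
  proof -
    have "(\<lambda>\<omega>. D j *v (\<theta>s - \<theta>) + w \<omega> j) \<in> borel_measurable M"
      using meas by measurable
    from measurable_sets[OF this borel_closed[OF closedW]]
    have "{\<omega> \<in> space M. D j *v (\<theta>s - \<theta>) + w \<omega> j \<in> W} \<in> sets M"
      by (simp add: vimage_def Int_def conj_commute)
    hence "space M - {\<omega> \<in> space M. D j *v (\<theta>s - \<theta>) + w \<omega> j \<in> W} \<in> sets M" by auto
    moreover have "space M - {\<omega> \<in> space M. D j *v (\<theta>s - \<theta>) + w \<omega> j \<in> W} =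
       {\<omega> \<in> space M. \<theta> \<notin> unfalsified W D w \<theta>s (j+1) \<omega>}"
      unfolding unfalsified_def by auto
    ultimately show ?thesis by simp
  qed
  have "p_w \<delta> \<le> measure M {\<omega> \<in> space M. norm (w \<omega> j - w0) < \<delta>}"
    using tight[OF w0fr[unfolded W_def] dpos] by simp
  also have "\<dots> \<le> measure M {\<omega> \<in> space M. \<theta> \<notin> unfalsified W D w \<theta>s (j+1) \<omega>}"
    by (rule P.finite_measure_mono[OF sub mset])
  finally have "p_w \<delta> \<le> measure M {\<omega> \<in> space M. \<theta> \<notin> unfalsified W D w \<theta>s (j+1) \<omega>}" .
  moreover have "j + 1 \<in> {t+1..t+N_u}" using j \<open>N_u \<ge> 1\<close> by auto
  ultimately show ?thesis unfolding W_def \<delta>_def by (intro bexI)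
qed

end
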